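(* Let $(\mathcal Q,d)$ be a Hadamard space, $Y$ a $\mathcal Q$-valued random variable, $o\in\mathcal Q$, and $\tau\in\mathcal S_0^+$ with $\tau'(0)=0$ and $\mathbb E[\tau'(d(Y,o))]<\infty$. Let $m\in\arg\min_{q\in\mathcal Q}\mathbb E[\tau(d(Y,q))-\tau(d(Y,o))]$. Then for all $q\in\mathcal Q$, $$\mathbb E[\tau(d(Y,q))-\tau(d(Y,m))]\ \ge\ \tau(d(q,m))\,\mathbb P(Y=m).$$
   Context: A Hadamard space is a complete metric space $(\mathcal Q,d)$ such that for all $y_0,y_1$ there is $m$ with $\frac12 d(y_0,q)^2+\frac12 d(y_1,q)^2-\frac14 d(y_0,y_1)^2\ge d(q,m)^2$ for all $q$. $\mathcal S_0^+$ is the set of nondecreasing convex $\tau:[0,\infty)\to\mathbb R$, differentiable on $(0,\infty)$ with concave derivative $\tau'$, where $\tau'(0):=\lim_{x\searrow0}\tau'(x)$, such that $\tau(0)=0$ and $\tau'(x)>0$ for $x>0$. *)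

theory Defs
  imports "HOL-Probability.Probability"
begin

definition hadamard_space :: "'a::metric_space itself \<Rightarrow> bool" where
  "hadamard_space _ \<longleftrightarrow> Topological_Spaces.complete (UNIV :: 'a set) \<and>
     (\<forall>y0 y1 :: 'a. \<exists>m. \<forall>q.
        (1/2) * (dist y0 q)^2 + (1/2) * (dist y1 q)^2 - (1/4) * (dist y0 y1)^2
          \<ge> (dist q m)^2)"

definition dtau :: "(real \<Rightarrow> real) \<Rightarrow> real \<Rightarrow> real" where
  "dtau \<tau> x = (if x > 0 then deriv \<tau> x else Lim (at_right 0) (deriv \<tau>))"

definition S0plus :: "(real \<Rightarrow> real) set" where
  "S0plus = {\<tau>. mono_on {0..} \<tau> \<and> convex_on {0..} \<tau> \<and>
      (\<forall>x>0. \<tau> differentiable (at x)) \<and>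
      concave_on {0<..} (deriv \<tau>) \<and>
      \<tau> 0 = 0 \<and> (\<forall>x>0. deriv \<tau> x > 0)}"

end

theory Submission imports Defs begin


locale tauS =
  fixes \<tau> :: "real \<Rightarrow> real"
  assumes S: "\<tau> \<in> S0plus" and d0: "dtau \<tau> 0 = 0"
begin

lemma tmono: "0 \<le> x \<Longrightarrow> x \<le> y \<Longrightarrow> \<tau> x \<le> \<tau> y"
  using S unfolding S0plus_def mono_on_def by auto

lemma tnonneg: "0 \<le> x \<Longrightarrow> 0 \<le> \<tau> x"
  using tmono[of 0 x] S unfolding S0plus_def by auto

lemma tconv: "convex_on {0..} \<tau>" using S unfolding S0plus_def by auto

lemma tderiv: "0 < x \<Longrightarrow> (\<tau> has_real_derivative deriv \<tau> x) (at x)"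
  using S unfolding S0plus_def DERIV_deriv_iff_real_differentiable by auto

lemma dpos: "0 < x \<Longrightarrow> 0 < deriv \<tau> x"
  using S unfolding S0plus_def by auto

lemma tangent: assumes "0 < x" "0 \<le> y" shows "\<tau> y - \<tau> x \<ge> deriv \<tau> x * (y - x)"
  apply (rule convex_on_imp_above_tangent[OF tconv])
  using assms by (auto intro: has_field_derivative_at_within tderiv)

lemma dmono: assumes "0 < x" "x \<le> y" shows "deriv \<tau> x \<le> deriv \<tau> y"
proof -
  have 1: "\<tau> y - \<tau> x \<ge> deriv \<tau> x * (y - x)" using tangent assms by auto
  have 2: "\<tau> x - \<tau> y \<ge> deriv \<tau> y * (x - y)" using tangent assms by auto
  show ?thesis
  proof (cases "x = y")
    case False
    with assms have "y - x > 0" by auto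
    moreover have "deriv \<tau> x * (y - x) \<le> deriv \<tau> y * (y - x)" using 1 2 by (auto simp: algebra_simps)
    ultimately show ?thesis by simp
  qed simp
qed

lemma dconc: assumes "0 < c" "c \<le> b"
  shows "deriv \<tau> (b+c) + deriv \<tau> c \<le> deriv \<tau> b + deriv \<tau> (2*c)"
proof -
  have cv: "convex_on {0<..} (\<lambda>x. - deriv \<tau> x)" using S unfolding S0plus_def concave_on_def by auto
  define l where "l = c / b"
  have l0: "0 \<le> l" "l \<le> 1" using assms by (auto simp: l_def)
  have e1: "(1 - l) *\<^sub>R (b+c) + l *\<^sub>R c = b" using assms by (simp add: l_def field_simps)
  have e2: "(1 - l) *\<^sub>R c + l *\<^sub>R (b+c) = 2*c" using assms by (simp add: l_def field_simps)
  have "- deriv \<tau> b \<le> (1-l) * - deriv \<tau> (b+c) + l * - deriv \<tau> c"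
    using convex_onD[OF cv l0, of "b+c" c] assms e1 by auto
  moreover have "- deriv \<tau> (2*c) \<le> (1-l) * - deriv \<tau> c + l * - deriv \<tau> (b+c)"
    using convex_onD[OF cv l0, of c "b+c"] assms e2 by auto
  ultimately show ?thesis by (auto simp: algebra_simps)
qed

lemma dbound: assumes "0 < b" and c: "0 < c" shows "deriv \<tau> (b+c) \<le> deriv \<tau> b + deriv \<tau> (2*c)"
proof -
  show ?thesis
  proof (cases "c \<le> b")
    case True
    thus ?thesis using dconc[OF c True] dpos[OF c] by auto
  next
    case False
    thus ?thesis using dmono[of "b+c" "2*c"] dpos[OF assms(1)] c assms by auto
  qed
qed


lemma diffbound: assumes "0 \<le> a" "0 \<le> b" "\<bar>a - b\<bar> \<le> c"
  shows "\<bar>\<tau> a - \<tau> b\<bar> \<le> c * dtau \<tau> b + (c * \<bar>deriv \<tau> (2*c)\<bar> + \<tau> c)"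
proof (cases "c = 0")
  case True thus ?thesis using assms tnonneg[of 0] by simp
next
  case False
  hence c: "c > 0" using assms by auto
  have K: "0 \<le> c * \<bar>deriv \<tau> (2*c)\<bar>" using c by simp
  have tc: "0 \<le> \<tau> c" using tnonneg c by auto
  show ?thesis
  proof (cases "b = 0")
    case True
    have "\<tau> 0 = 0" using S unfolding S0plus_def by auto
    moreover have "\<tau> a \<le> \<tau> c" using tmono[of a c] assms True by auto
    ultimately have "\<tau> a - \<tau> 0 \<le> c * \<bar>deriv \<tau> (2*c)\<bar> + \<tau> c" using K by linarith
    thus ?thesis using True tnonneg[of a] assms d0 \<open>\<tau> 0 = 0\<close> by simp
  next
    case False
    hence b: "b > 0" using assms by auto
    have db: "dtau \<tau> b = deriv \<tau> b" using b by (simp add: dtau_def)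
    show ?thesis
    proof (cases "a \<ge> b")
      case True
      hence a: "a > 0" using b by auto
      have t: "\<tau> b - \<tau> a \<ge> deriv \<tau> a * (b - a)" using tangent[OF a, of b] b by auto
      have "deriv \<tau> a \<le> deriv \<tau> (b+c)" using dmono[OF a] assms by auto
      also have "\<dots> \<le> deriv \<tau> b + deriv \<tau> (2*c)" using dbound[OF b c] .
      finally have d1: "deriv \<tau> a \<le> deriv \<tau> b + \<bar>deriv \<tau> (2*c)\<bar>" by auto
      have "\<tau> a - \<tau> b \<le> deriv \<tau> a * (a - b)" using t by (auto simp: algebra_simps)
      also have "\<dots> \<le> (deriv \<tau> b + \<bar>deriv \<tau> (2*c)\<bar>) * c"
        apply (rule mult_mono) using d1 assms True dpos[OF a] by auto
      finally have "\<tau> a - \<tau> b \<le> c * deriv \<tau> b + c * \<bar>deriv \<tau> (2*c)\<bar>" by (simp add: algebra_simps)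
      moreover have "\<tau> b \<le> \<tau> a" using tmono True assms by auto
      ultimately show ?thesis using db tc K by (simp add: abs_if)
    next
      case False
      have t: "\<tau> a - \<tau> b \<ge> deriv \<tau> b * (a - b)" using tangent[OF b, of a] assms by auto
      have "\<tau> b - \<tau> a \<le> deriv \<tau> b * (b - a)" using t by (auto simp: algebra_simps)
      also have "\<dots> \<le> deriv \<tau> b * c"
        apply (rule mult_left_mono) using assms False dpos[OF b] by auto
      finally have "\<tau> b - \<tau> a \<le> c * deriv \<tau> b" by (simp add: algebra_simps)
      moreover have "\<tau> a \<le> \<tau> b" using tmono False assms by auto
      ultimately show ?thesis using db tc K by (simp add: abs_if) 
    qed
  qed
qed


lemma tratio: "0 < x \<Longrightarrow> \<tau> x \<le> x * deriv \<tau> x"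
  using tangent[of x 0] S unfolding S0plus_def by (auto simp: algebra_simps)

lemma dsmall: assumes "e > 0" shows "\<exists>x>0. deriv \<tau> x < e"
proof -
  define L where "L = Inf (deriv \<tau> ` {0<..})"
  have bdd: "bdd_below (deriv \<tau> ` {0<..})" using dpos by (auto intro!: bdd_belowI[of _ 0] less_imp_le)
  have lim: "(deriv \<tau> \<longlongrightarrow> L) (at_right 0)"
  proof (rule order_tendstoI)
    fix a assume "a < L"
    have "\<forall>x>0. L \<le> deriv \<tau> x" unfolding L_def using bdd by (auto intro: cInf_lower)
    with \<open>a < L\<close> show "eventually (\<lambda>x. a < deriv \<tau> x) (at_right 0)"
      unfolding eventually_at_right_field by (auto intro!: exI[of _ 1])
  next
    fix a assume "L < a"
    then obtain x0 where x0: "x0 > 0" "deriv \<tau> x0 < a" unfolding L_def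
      using cInf_lessD[of "deriv \<tau> ` {0<..}" a] by auto
    show "eventually (\<lambda>x. deriv \<tau> x < a) (at_right 0)"
      unfolding eventually_at_right_field using x0 dmono
      by (auto intro!: exI[of _ x0]) (meson less_imp_le order_le_less_trans)
  qed
  have "Lim (at_right 0) (deriv \<tau>) = L" by (rule tendsto_Lim[OF _ lim]) simp
  hence "L = 0" using d0 by (simp add: dtau_def)
  thus ?thesis using cInf_lessD[of "deriv \<tau> ` {0<..}" e] assms unfolding L_def by auto
qed

end


lemma mid_exists:
  assumes "hadamard_space TYPE('a::metric_space)"
  shows "\<exists>mid::'a\<Rightarrow>'a\<Rightarrow>'a. \<forall>y0 y1 y. dist y (mid y0 y1) \<le> (dist y0 y + dist y1 y)/2"
proof -
  have "\<forall>p::'a\<times>'a. \<exists>m. \<forall>y. dist y m \<le> (dist (fst p) y + dist (snd p) y)/2"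
  proof
    fix p :: "'a \<times> 'a"
    obtain y0 y1 where p: "p = (y0, y1)" by fastforce
    obtain m where m: "\<forall>q. (1/2) * (dist y0 q)^2 + (1/2) * (dist y1 q)^2 - (1/4) * (dist y0 y1)^2
          \<ge> (dist q m)^2" using assms unfolding hadamard_space_def by blast
    have "\<forall>y. dist y m \<le> (dist y0 y + dist y1 y)/2"
    proof
      fix y
      define a where "a = dist y0 y"
      define b where "b = dist y1 y"
      define c where "c = dist y0 y1"
      have "\<bar>a - b\<bar> \<le> c" unfolding a_def b_def c_def
        by (smt (verit) dist_commute dist_triangle)
      hence "(a-b)^2 \<le> c^2"
        by (metis abs_le_square_iff abs_of_nonneg c_def zero_le_dist)
      moreover have "(dist y m)^2 \<le> (1/2)*a^2 + (1/2)*b^2 - (1/4)*c^2"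
        using m[rule_format, of y] a_def b_def c_def by simp
      ultimately have "(dist y m)^2 \<le> ((a+b)/2)^2" by (simp add: power2_eq_square algebra_simps)
      moreover have "0 \<le> (a+b)/2" by (simp add: a_def b_def)
      ultimately show "dist y m \<le> (dist y0 y + dist y1 y)/2"
        using power2_le_imp_le a_def b_def by blast
    qed
    thus "\<exists>m. \<forall>y. dist y m \<le> (dist (fst p) y + dist (snd p) y)/2" using p by auto
  qed
  then obtain f where f: "\<forall>p::'a\<times>'a. \<forall>y. dist y (f p) \<le> (dist (fst p) y + dist (snd p) y)/2"
    by metis
  show ?thesis by (rule exI[of _ "\<lambda>a b. f (a,b)"]) (use f in auto)
qed

primrec geo :: "('a \<Rightarrow> 'a \<Rightarrow> 'a) \<Rightarrow> 'a \<Rightarrow> 'a \<Rightarrow> nat \<Rightarrow> 'a" where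
  "geo mid m q 0 = q"
| "geo mid m q (Suc k) = mid m (geo mid m q k)"

lemma geo_bound:
  fixes mid :: "'a::metric_space \<Rightarrow> 'a \<Rightarrow> 'a"
  assumes "\<forall>y0 y1 y. dist y (mid y0 y1) \<le> (dist y0 y + dist y1 y)/2"
  shows "dist y (geo mid m q k) \<le> (1 - (1/2)^k) * dist y m + (1/2)^k * dist y q"
proof (induction k)
  case 0 thus ?case by simp
next
  case (Suc k)
  have "dist y (geo mid m q (Suc k)) \<le> (dist m y + dist (geo mid m q k) y)/2"
    using assms by simp
  also have "\<dots> \<le> (dist y m + ((1 - (1/2)^k) * dist y m + (1/2)^k * dist y q))/2"
    using Suc by (simp add: dist_commute)
  also have "\<dots> = (1 - (1/2)^Suc k) * dist y m + (1/2)^Suc k * dist y q"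
    by (simp add: field_simps)
  finally show ?case .
qed



theorem mainTheorem9:
  fixes M :: "'w measure" and Y :: "'w \<Rightarrow> 'a::metric_space"
    and x\<^sub>0 :: 'a and \<tau> :: "real \<Rightarrow> real" and m :: 'a
  assumes "hadamard_space TYPE('a)"
    and "prob_space M"
    and "Y \<in> M \<rightarrow>\<^sub>M borel"
    and "\<tau> \<in> S0plus"
    and "dtau \<tau> 0 = 0"
    and "integrable M (\<lambda>\<omega>. dtau \<tau> (dist (Y \<omega>) x\<^sub>0))"
    and "\<forall>q. (\<integral>\<omega>. \<tau> (dist (Y \<omega>) m) - \<tau> (dist (Y \<omega>) x\<^sub>0) \<partial>M)
              \<le> (\<integral>\<omega>. \<tau> (dist (Y \<omega>) q) - \<tau> (dist (Y \<omega>) x\<^sub>0) \<partial>M)"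
  shows "\<forall>q. (\<integral>\<omega>. \<tau> (dist (Y \<omega>) q) - \<tau> (dist (Y \<omega>) m) \<partial>M)
              \<ge> \<tau> (dist q m) * measure M {\<omega> \<in> space M. Y \<omega> = m}"
proof
  interpret P: prob_space M by fact
  interpret T: tauS \<tau> using assms(4,5) by unfold_locales
  have t0: "\<tau> 0 = 0" using assms(4) unfolding S0plus_def by auto
  obtain mid :: "'a \<Rightarrow> 'a \<Rightarrow> 'a" where mid: "\<forall>y0 y1 y. dist y (mid y0 y1) \<le> (dist y0 y + dist y1 y)/2"
    using mid_exists[OF assms(1)] by blast
  define f where "f q \<omega> = \<tau> (dist (Y \<omega>) q)" for q \<omega>
  have meas: "f q \<in> borel_measurable M" for q
  proof -
    define tm where "tm x = \<tau> (max 0 x)" for x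
    have "mono tm" unfolding tm_def mono_def using T.tmono by auto
    hence tmm: "tm \<in> borel_measurable borel" by (rule borel_measurable_mono)
    have dm: "(\<lambda>y::'a. dist y q) \<in> borel_measurable borel"
      by (intro borel_measurable_continuous_onI continuous_intros)
    have "(\<lambda>\<omega>. tm (dist (Y \<omega>) q)) \<in> borel_measurable M"
      using measurable_compose[OF measurable_compose[OF assms(3) dm] tmm] by simp
    moreover have "(\<lambda>\<omega>. tm (dist (Y \<omega>) q)) = f q" by (auto simp: tm_def f_def)
    ultimately show ?thesis by simp
  qed
  have intg: "integrable M (\<lambda>\<omega>. f q \<omega> - f x\<^sub>0 \<omega>)" for q
  proof -
    define c where "c = dist q x\<^sub>0"
    define K where "K = c * \<bar>deriv \<tau> (2*c)\<bar> + \<tau> c"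
    have I1: "integrable M (\<lambda>\<omega>. c * dtau \<tau> (dist (Y \<omega>) x\<^sub>0) + K)"
      using assms(6) by auto
    have AE1: "AE \<omega> in M. norm (f q \<omega> - f x\<^sub>0 \<omega>) \<le> norm (c * dtau \<tau> (dist (Y \<omega>) x\<^sub>0) + K)"
    proof (rule AE_I2)
      fix \<omega>
      have "\<bar>dist (Y \<omega>) q - dist (Y \<omega>) x\<^sub>0\<bar> \<le> c" unfolding c_def
        by (smt (verit) dist_commute dist_triangle)
      hence "\<bar>f q \<omega> - f x\<^sub>0 \<omega>\<bar> \<le> c * dtau \<tau> (dist (Y \<omega>) x\<^sub>0) + K"
        unfolding f_def K_def by (intro T.diffbound) auto
      thus "norm (f q \<omega> - f x\<^sub>0 \<omega>) \<le> norm (c * dtau \<tau> (dist (Y \<omega>) x\<^sub>0) + K)" by simp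
    qed
    show ?thesis by (rule Bochner_Integration.integrable_bound[OF I1 _ AE1]) (use meas in auto)
  qed
  define F where "F q = (\<integral>\<omega>. f q \<omega> - f x\<^sub>0 \<omega> \<partial>M)" for q
  have Fmin: "F m \<le> F q" for q using assms(7) unfolding F_def f_def by auto
  have gint: "integrable M (\<lambda>\<omega>. f q \<omega> - f p \<omega>)" for q p
    using Bochner_Integration.integrable_diff[OF intg[of q] intg[of p]] by simp
  have Eeq: "(\<integral>\<omega>. f q \<omega> - f p \<omega> \<partial>M) = F q - F p" for q p
  proof -
    have "(\<integral>\<omega>. (f q \<omega> - f x\<^sub>0 \<omega>) - (f p \<omega> - f x\<^sub>0 \<omega>) \<partial>M) = F q - F p"
      unfolding F_def by (rule Bochner_Integration.integral_diff[OF intg intg])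
    thus ?thesis by simp
  qed
  define A where "A = {\<omega> \<in> space M. Y \<omega> = m}"
  have Asets: "A \<in> sets M"
  proof -
    have "Y -` {m} \<inter> space M \<in> sets M"
      using measurable_sets[OF assms(3)] by (simp add: borel_closed)
    moreover have "Y -` {m} \<inter> space M = A" unfolding A_def by auto
    ultimately show ?thesis by simp
  qed
  have Aint: "integrable M (indicator A :: 'w \<Rightarrow> real)"
    using Asets by (intro integrable_real_indicator) (auto simp: less_top[symmetric])
  have Aintg: "(\<integral>\<omega>. indicator A \<omega> \<partial>M) = measure M A"
    using Asets sets.sets_into_space by (simp add: Int_absorb2)
  have PA: "measure M A \<le> 1" "0 \<le> measure M A" by auto
  fix q
  define D where "D = dist q m"
  define Eg where "Eg = (\<integral>\<omega>. f q \<omega> - f m \<omega> \<partial>M)"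
  show "(\<integral>\<omega>. \<tau> (dist (Y \<omega>) q) - \<tau> (dist (Y \<omega>) m) \<partial>M)
              \<ge> \<tau> (dist q m) * measure M {\<omega> \<in> space M. Y \<omega> = m}"
  proof (cases "D = 0")
    case True
    hence "q = m" unfolding D_def by simp
    thus ?thesis using t0 by simp
  next
    case False
    hence D: "D > 0" unfolding D_def by simp
    have key: "\<tau> D * measure M A \<le> Eg + e" if e: "e > 0" for e
    proof -
      obtain x1 where x1: "x1 > 0" "deriv \<tau> x1 < e / D" using T.dsmall[of "e/D"] e D by auto
      obtain k where k: "(1/2::real)^k < x1 / D" using real_arch_pow_inv[of "x1/D" "1/2"] x1 D by auto
      define s where "s = (1/2::real)^k"
      have s: "0 < s" "s \<le> 1" unfolding s_def by (auto simp: power_le_one)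
      have sD: "0 < s * D" "s * D \<le> x1" using s D k unfolding s_def by (auto simp: field_simps)
      have "deriv \<tau> (s*D) \<le> deriv \<tau> x1" using T.dmono sD by auto
      hence "\<tau> (s*D) \<le> s * D * (e / D)"
        using T.tratio[OF sD(1)] x1 sD(1) by (smt (verit) mult_left_mono)
      hence tsD: "\<tau> (s*D) \<le> s * e" using D by simp
      define \<gamma> where "\<gamma> = geo mid m q k"
      have gb: "dist y \<gamma> \<le> (1 - s) * dist y m + s * dist y q" for y
        unfolding \<gamma>_def s_def by (rule geo_bound[OF mid])
      define cc where "cc = \<tau> (s*D) - s * \<tau> D"
      have pw: "f \<gamma> \<omega> - f m \<omega> \<le> s * (f q \<omega> - f m \<omega>) + cc * indicator A \<omega>" if "\<omega> \<in> space M" for \<omega>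
      proof (cases "Y \<omega> = m")
        case True
        have "dist m \<gamma> \<le> s * D" using gb[of m] unfolding D_def by (simp add: dist_commute)
        hence "\<tau> (dist m \<gamma>) \<le> \<tau> (s*D)" using T.tmono by auto
        thus ?thesis using True that t0 unfolding f_def A_def cc_def D_def
          by (simp add: dist_commute algebra_simps)
      next
        case False
        define a where "a = dist (Y \<omega>) m"
        define b where "b = dist (Y \<omega>) q"
        have "\<tau> (dist (Y \<omega>) \<gamma>) \<le> \<tau> ((1 - s) * a + s * b)"
          using gb[of "Y \<omega>"] s unfolding a_def b_def by (intro T.tmono) auto
        also have "\<dots> \<le> (1 - s) * \<tau> a + s * \<tau> b"
          using convex_onD[OF T.tconv, of s a b] s unfolding a_def b_def by auto
        finally show ?thesis using False unfolding f_def A_def a_def b_def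
          by (simp add: algebra_simps)
      qed
      have "0 \<le> F \<gamma> - F m" using Fmin by auto
      also have "\<dots> = (\<integral>\<omega>. f \<gamma> \<omega> - f m \<omega> \<partial>M)" using Eeq by simp
      also have "\<dots> \<le> (\<integral>\<omega>. s * (f q \<omega> - f m \<omega>) + cc * indicator A \<omega> \<partial>M)"
        by (rule integral_mono) (use gint Aint pw in auto)
      also have "\<dots> = s * Eg + cc * measure M A"
        using gint Aint Aintg unfolding Eg_def by simp
      finally have "0 \<le> s * Eg + cc * measure M A" .
      hence "s * (\<tau> D * measure M A) \<le> s * Eg + \<tau> (s*D) * measure M A"
        unfolding cc_def by (simp add: algebra_simps)
      also have "\<dots> \<le> s * Eg + s * e"
        using tsD PA s e T.tnonneg[of "s*D"] sD
        by (smt (verit) mult_left_le mult_mono)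
      finally have "s * (\<tau> D * measure M A) \<le> s * (Eg + e)" by (simp add: algebra_simps)
      thus ?thesis using s by simp
    qed
    have "\<tau> D * measure M A \<le> Eg" by (rule field_le_epsilon) (rule key)
    thus ?thesis unfolding Eg_def f_def D_def A_def .
  qed
qed

end
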